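(* Let $H\in\mathbb{R}^{\ell\times\ell}$ be symmetric, $0\ne g_0\in\mathbb{R}^\ell$, $\gamma>0$, and let $(\lambda_*,w_* )$ be a minimizer of pQEPmin. (1) If $g_0^{\top}w_*\ne0$ for all minimizers $(\lambda_*,w_* )$ of pQEPmin, then $\lambda_*<\lambda_{\min}(H)$ and the minimizer of pLGopt is unique. (2) If there exists a minimizer $(\lambda_*,w_* )$ of pQEPmin with $g_0^{\top}w_*=0$, then $\lambda_*=\lambda_{\min}(H)$, and the minimizer of pLGopt is unique if and only if $\|x_*\|=\gamma$, where $x_*=-(H-\lambda_*I)^{\dagger}g_0$.
   Context: pLGopt: minimize $\lambda$ over pairs $(\lambda,y)\in\mathbb{R}\times\mathbb{R}^\ell$ with $(H-\lambda I)y=-g_0$ and $\|y\|=\gamma$. pQEPmin: minimize $\lambda$ over pairs $(\lambda,w)$ with $\lambda\in\mathbb{R}$, $0\ne w\in\mathbb{R}^\ell$ and $(H-\lambda I)^2w=\gamma^{-2}g_0g_0^{\top}w$. $\lambda_{\min}(H)$ is the smallest eigenvalue of $H$; $X^\dagger$ is the Moore–Penrose inverse. *)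

theory Defs
  imports "HOL-Analysis.Analysis"
begin

definition pLG_feasible :: "real^'n^'n \<Rightarrow> real^'n \<Rightarrow> real \<Rightarrow> real \<times> (real^'n) \<Rightarrow> bool" where
  "pLG_feasible H g0 \<gamma> p \<longleftrightarrow>
     (H - fst p *\<^sub>R mat 1) *v snd p = - g0 \<and> norm (snd p) = \<gamma>"

definition pLG_minimizer :: "real^'n^'n \<Rightarrow> real^'n \<Rightarrow> real \<Rightarrow> real \<times> (real^'n) \<Rightarrow> bool" where
  "pLG_minimizer H g0 \<gamma> p \<longleftrightarrow>
     pLG_feasible H g0 \<gamma> p \<and> (\<forall>q. pLG_feasible H g0 \<gamma> q \<longrightarrow> fst p \<le> fst q)"

definition pQEP_feasible :: "real^'n^'n \<Rightarrow> real^'n \<Rightarrow> real \<Rightarrow> real \<times> (real^'n) \<Rightarrow> bool" where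
  "pQEP_feasible H g0 \<gamma> p \<longleftrightarrow>
     snd p \<noteq> 0 \<and>
     ((H - fst p *\<^sub>R mat 1) ** (H - fst p *\<^sub>R mat 1)) *v snd p
        = (inverse (\<gamma>^2)) *\<^sub>R ((g0 \<bullet> snd p) *\<^sub>R g0)"

definition pQEP_minimizer :: "real^'n^'n \<Rightarrow> real^'n \<Rightarrow> real \<Rightarrow> real \<times> (real^'n) \<Rightarrow> bool" where
  "pQEP_minimizer H g0 \<gamma> p \<longleftrightarrow>
     pQEP_feasible H g0 \<gamma> p \<and> (\<forall>q. pQEP_feasible H g0 \<gamma> q \<longrightarrow> fst p \<le> fst q)"

definition lambda_min :: "real^'n^'n \<Rightarrow> real" where
  "lambda_min H = Min {\<mu>. \<exists>v. v \<noteq> 0 \<and> H *v v = \<mu> *\<^sub>R v}"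

definition mp_pinv :: "real^'n^'m \<Rightarrow> real^'m^'n" where
  "mp_pinv A = (THE X. A ** X ** A = A \<and> X ** A ** X = X \<and>
                      transpose (A ** X) = A ** X \<and> transpose (X ** A) = X ** A)"

end

theory Submission
  imports Defs
begin

lemma symdot:
  fixes M :: "real^'n^'n"
  assumes "transpose M = M"
  shows "(M *v x) \<bullet> y = x \<bullet> (M *v y)"
proof -
  have "x \<bullet> (M *v y) = (x v* M) \<bullet> y" by (simp add: dot_lmul_matrix)
  also have "x v* M = transpose M *v x" by simp
  finally show ?thesis using assms by (simp add: inner_commute)
qed

lemma shift_mv: "((H::real^'n^'n) - c *\<^sub>R mat 1) *v x = H *v x - c *\<^sub>R x"
  by (simp add: matrix_vector_mult_diff_rdistrib scaleR_matrix_vector_assoc[symmetric])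

lemma shift_sym: "transpose (H::real^'n^'n) = H \<Longrightarrow> transpose (H - c *\<^sub>R mat 1) = H - c *\<^sub>R mat 1"
  by (simp add: transpose_def vec_eq_iff mat_def)

lemma sym_iff_dot:
  fixes M :: "real^'n^'n"
  assumes "\<And>x y. (M *v x) \<bullet> y = x \<bullet> (M *v y)"
  shows "transpose M = M"
proof -
  have "transpose M *v y = M *v y" for y
  proof -
    have "x \<bullet> (transpose M *v y) = x \<bullet> (M *v y)" for x
      using assms[of x y] by (simp add: dot_lmul_matrix[symmetric] inner_commute)
    then show ?thesis by (metis inner_diff_right inner_eq_zero_iff right_minus_eq) 
  qed
  then show ?thesis by (simp add: matrix_eq)
qed

lemma quad_lemma:
  fixes c d :: real
  assumes "d \<ge> 0" "\<And>t. 2*t*c + t^2*d \<ge> 0"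
  shows "c = 0"
proof (rule ccontr)
  assume "c \<noteq> 0"
  define t where "t = - c / (d+1)"
  have td: "t * (d+1) = -c" using assms(1) by (simp add: t_def)
  have "(d+1)^2 * (2*t*c + t^2*d) = 2*c*(t*(d+1))*(d+1) + (t*(d+1))^2*d"
    by (simp add: power2_eq_square algebra_simps)
  also have "\<dots> = -(c^2 * (d+2))" unfolding td by (simp add: power2_eq_square algebra_simps)
  also have "\<dots> < 0" using \<open>c \<noteq> 0\<close> assms(1) by (simp add: mult_pos_pos)
  finally have "(d+1)^2 * (2*t*c + t^2*d) < 0" .
  moreover have "(d+1)^2 * (2*t*c + t^2*d) \<ge> 0" using assms by simp
  ultimately show False by simp
qed

context
  fixes H :: "real^'n^'n"
  assumes symH: "transpose H = H"
begin

lemma Hsym: "(H *v x) \<bullet> y = x \<bullet> (H *v y)"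
  using symdot[OF symH] .

lemma rayleigh_exists:
  obtains m v where "norm v = 1" "H *v v = m *\<^sub>R v" "\<And>x. m * (x \<bullet> x) \<le> x \<bullet> (H *v x)"
proof -
  define f where "f x = x \<bullet> (H *v x)" for x
  have cont: "continuous_on (sphere 0 1) f"
    unfolding f_def by (intro continuous_intros linear_continuous_on matrix_vector_mul_bounded_linear)
  have ne: "sphere (0::real^'n) 1 \<noteq> {}"
    using vector_choose_size[of 1] by auto
  obtain v where v: "v \<in> sphere 0 1" "\<And>y. y \<in> sphere 0 1 \<Longrightarrow> f v \<le> f y"
    using continuous_attains_inf[OF compact_sphere ne cont] by blast
  define m where "m = f v"
  have nv: "norm v = 1" using v by simp
  have vv: "v \<bullet> v = 1" using nv by (simp add: power2_norm_eq_inner[symmetric])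
  have ray: "m * (x \<bullet> x) \<le> f x" for x
  proof (cases "x = 0")
    case True then show ?thesis by (simp add: f_def)
  next
    case False
    define y where "y = (1 / norm x) *\<^sub>R x"
    have "y \<in> sphere 0 1" using False by (simp add: y_def)
    hence "m \<le> f y" using v m_def by simp
    also have "f y = f x / (norm x)^2"
      by (simp add: f_def y_def matrix_vector_mult_scaleR power2_eq_square)
    finally have "m * (norm x)^2 \<le> f x" using False by (simp add: field_simps)
    then show ?thesis by (simp add: power2_norm_eq_inner)
  qed
  have eig: "H *v v = m *\<^sub>R v"
  proof -
    have c0: "u \<bullet> (H *v v - m *\<^sub>R v) = 0" for u
    proof (rule quad_lemma)
      show "f u - m * (u \<bullet> u) \<ge> 0" using ray[of u] by simp
      fix t :: real
      have "m * ((v + t *\<^sub>R u) \<bullet> (v + t *\<^sub>R u)) \<le> f (v + t *\<^sub>R u)" by (rule ray)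
      moreover have "f (v + t *\<^sub>R u) = m + 2 * t * (u \<bullet> (H *v v)) + t^2 * f u"
        using Hsym[of v u]
        by (simp add: f_def m_def matrix_vector_right_distrib matrix_vector_mult_scaleR
            inner_add_left inner_add_right power2_eq_square algebra_simps inner_commute)
      moreover have "(v + t *\<^sub>R u) \<bullet> (v + t *\<^sub>R u) = 1 + 2 * t * (u \<bullet> v) + t^2 * (u \<bullet> u)"
        using vv by (simp add: inner_add_left inner_add_right power2_eq_square algebra_simps inner_commute)
      ultimately show "2 * t * (u \<bullet> (H *v v - m *\<^sub>R v)) + t^2 * (f u - m * (u \<bullet> u)) \<ge> 0"
        using vv inner_commute[of v u] by (simp add: inner_diff_right algebra_simps power2_eq_square)
    qed
    from c0[of "H *v v - m *\<^sub>R v"] show ?thesis by simp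
  qed
  show ?thesis using that[OF nv eig] ray f_def by simp
qed

definition eigs where "eigs = {\<mu>. \<exists>v. v \<noteq> 0 \<and> H *v v = \<mu> *\<^sub>R v}"

lemma eig_orth:
  assumes "H *v a = \<mu> *\<^sub>R a" "H *v b = \<nu> *\<^sub>R b" "\<mu> \<noteq> \<nu>"
  shows "a \<bullet> b = 0"
proof -
  have "\<mu> * (a \<bullet> b) = \<nu> * (a \<bullet> b)" using Hsym[of a b] assms by simp
  then show ?thesis using assms(3) by simp
qed

lemma finite_eigs: "finite eigs"
proof -
  define f where "f \<mu> = (SOME v. v \<noteq> 0 \<and> H *v v = \<mu> *\<^sub>R v)" for \<mu>
  have fp: "f \<mu> \<noteq> 0 \<and> H *v f \<mu> = \<mu> *\<^sub>R f \<mu>" if "\<mu> \<in> eigs" for \<mu>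
    using that unfolding eigs_def f_def by (metis (mono_tags, lifting) mem_Collect_eq someI_ex)
  have inj: "inj_on f eigs"
  proof (rule inj_onI)
    fix x y assume "x \<in> eigs" "y \<in> eigs" "f x = f y"
    then have "x *\<^sub>R f x = y *\<^sub>R f x" using fp by metis
    then show "x = y" using fp[OF \<open>x \<in> eigs\<close>] by (simp add: scaleR_cancel_right)
  qed
  have "pairwise orthogonal (f ` eigs)"
    unfolding pairwise_def orthogonal_def
    by (metis eig_orth fp imageE)
  moreover have "0 \<notin> f ` eigs" using fp by auto
  ultimately have "independent (f ` eigs)" by (rule pairwise_orthogonal_independent)
  then have "finite (f ` eigs)" using independent_bound by blast
  then show ?thesis using inj finite_imageD by blast
qed

lemma L_props:
  "\<exists>v. norm v = 1 \<and> H *v v = lambda_min H *\<^sub>R v"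
  "\<And>x. lambda_min H * (x \<bullet> x) \<le> x \<bullet> (H *v x)"
  "\<And>v \<mu>. v \<noteq> 0 \<Longrightarrow> H *v v = \<mu> *\<^sub>R v \<Longrightarrow> lambda_min H \<le> \<mu>"
proof -
  obtain m v where mv: "norm v = 1" "H *v v = m *\<^sub>R v" "\<And>x. m * (x \<bullet> x) \<le> x \<bullet> (H *v x)"
    using rayleigh_exists by blast
  have lb: "m \<le> \<mu>" if mu: "\<mu> \<in> eigs" for \<mu>
  proof -
    obtain u where u: "u \<noteq> 0" "H *v u = \<mu> *\<^sub>R u" using mu unfolding eigs_def by auto
    have "m * (u \<bullet> u) \<le> \<mu> * (u \<bullet> u)" using mv(3)[of u] u by simp
    moreover have "u \<bullet> u > 0" using u by simp
    ultimately show ?thesis by simp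
  qed
  have "m \<in> eigs" unfolding eigs_def using mv by (auto intro!: exI[of _ v])
  then have Lm: "lambda_min H = m"
    unfolding lambda_min_def eigs_def[symmetric]
    using lb finite_eigs by (intro Min_eqI) auto
  show "\<exists>v. norm v = 1 \<and> H *v v = lambda_min H *\<^sub>R v" using mv Lm by auto
  show "\<And>x. lambda_min H * (x \<bullet> x) \<le> x \<bullet> (H *v x)" using mv Lm by auto
  show "\<And>v \<mu>. v \<noteq> 0 \<Longrightarrow> H *v v = \<mu> *\<^sub>R v \<Longrightarrow> lambda_min H \<le> \<mu>"
    using lb Lm eigs_def by auto
qed

end

lemma smat_mv[simp]: "(c *\<^sub>R mat 1) *v (x::real^'n) = c *\<^sub>R x"
  by (simp add: scaleR_matrix_vector_assoc[symmetric])

lemma mv_neg: "(A::real^'n^'m) *v (- x) = - (A *v x)"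
  using linear_neg[OF matrix_vector_mul_linear[of A]] by simp

context
  fixes H :: "real^'n^'n"
  assumes symH: "transpose H = H"
begin

definition Rs where "Rs \<mu> = matrix_inv (H - \<mu> *\<^sub>R mat 1)"

lemma Asym: "((H - c *\<^sub>R mat 1) *v x) \<bullet> y = x \<bullet> ((H - c *\<^sub>R mat 1) *v y)"
  using symdot[OF shift_sym[OF symH]] .

lemma coercive:
  assumes "\<mu> < lambda_min H"
  shows "(lambda_min H - \<mu>) * norm z \<le> norm ((H - \<mu> *\<^sub>R mat 1) *v z)"
proof (cases "z = 0")
  case True then show ?thesis by simp
next
  case False
  let ?A = "H - \<mu> *\<^sub>R mat 1"
  have zz: "z \<bullet> z = norm z * norm z" by (metis power2_norm_eq_inner power2_eq_square)
  have 1: "(lambda_min H - \<mu>) * (z \<bullet> z) \<le> z \<bullet> (?A *v z)"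
    using L_props(2)[OF symH, of z] by (simp add: shift_mv inner_diff_right algebra_simps)
  have 2: "z \<bullet> (?A *v z) \<le> norm z * norm (?A *v z)" by (rule norm_cauchy_schwarz)
  have "norm z * ((lambda_min H - \<mu>) * norm z) = (lambda_min H - \<mu>) * (z \<bullet> z)"
    unfolding zz by (simp only: mult_ac)
  then have "norm z * ((lambda_min H - \<mu>) * norm z) \<le> norm z * norm (?A *v z)"
    using 1 2 by linarith
  moreover have "norm z > 0" using False by simp
  ultimately show ?thesis by (rule mult_left_le_imp_le)
qed

lemma inv_props:
  assumes "\<mu> < lambda_min H"
  shows "(H - \<mu> *\<^sub>R mat 1) *v (Rs \<mu> *v x) = x" "Rs \<mu> *v ((H - \<mu> *\<^sub>R mat 1) *v x) = x"
proof -
  let ?A = "H - \<mu> *\<^sub>R mat 1"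
  have "\<forall>x. ?A *v x = 0 \<longrightarrow> x = 0"
  proof (intro allI impI)
    fix x assume "?A *v x = 0"
    then have "(lambda_min H - \<mu>) * norm x \<le> 0" using coercive[OF assms, of x] by simp
    then show "x = 0" using assms by (simp add: mult_le_0_iff)
  qed
  then have "invertible ?A" using invertible_left_inverse matrix_left_invertible_ker by blast
  then have "?A ** Rs \<mu> = mat 1 \<and> Rs \<mu> ** ?A = mat 1"
    unfolding Rs_def matrix_inv_def invertible_def by (rule someI_ex)
  then show "?A *v (Rs \<mu> *v x) = x" "Rs \<mu> *v (?A *v x) = x"
    by (simp_all add: matrix_vector_mul_assoc)
qed

lemma R_bound:
  assumes "\<mu> < lambda_min H"
  shows "norm (Rs \<mu> *v x) \<le> norm x / (lambda_min H - \<mu>)"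
  using coercive[OF assms, of "Rs \<mu> *v x"] inv_props(1)[OF assms] assms
  by (simp add: field_simps)

lemma R_sym:
  assumes "\<mu> < lambda_min H"
  shows "x \<bullet> (Rs \<mu> *v y) = (Rs \<mu> *v x) \<bullet> y"
proof -
  have "x \<bullet> (Rs \<mu> *v y) = ((H - \<mu> *\<^sub>R mat 1) *v (Rs \<mu> *v x)) \<bullet> (Rs \<mu> *v y)"
    using inv_props(1)[OF assms] by simp
  also have "\<dots> = (Rs \<mu> *v x) \<bullet> ((H - \<mu> *\<^sub>R mat 1) *v (Rs \<mu> *v y))" by (rule Asym)
  also have "\<dots> = (Rs \<mu> *v x) \<bullet> y" using inv_props(1)[OF assms] by simp
  finally show ?thesis .
qed

lemma R_resolvent:
  assumes "\<mu> < lambda_min H" "\<nu> < lambda_min H"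
  shows "Rs \<mu> *v g - Rs \<nu> *v g = (\<mu> - \<nu>) *\<^sub>R (Rs \<mu> *v (Rs \<nu> *v g))"
proof -
  define a where "a = Rs \<mu> *v g"
  define b where "b = Rs \<nu> *v g"
  have ha: "H *v a - \<mu> *\<^sub>R a = g" using inv_props(1)[OF assms(1), of g] by (simp add: a_def shift_mv)
  have hb: "H *v b - \<nu> *\<^sub>R b = g" using inv_props(1)[OF assms(2), of g] by (simp add: b_def shift_mv)
  have "(H - \<mu> *\<^sub>R mat 1) *v (a - b) = (\<mu> - \<nu>) *\<^sub>R b"
    using ha hb by (simp add: shift_mv matrix_vector_mult_diff_distrib algebra_simps)
  then have "Rs \<mu> *v ((H - \<mu> *\<^sub>R mat 1) *v (a - b)) = Rs \<mu> *v ((\<mu> - \<nu>) *\<^sub>R b)" by simp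
  then have "a - b = (\<mu> - \<nu>) *\<^sub>R (Rs \<mu> *v b)"
    using inv_props(2)[OF assms(1)] by (simp add: matrix_vector_mult_scaleR)
  then show ?thesis by (simp add: a_def b_def)
qed

lemma psi_lip:
  assumes "b < lambda_min H"
  shows "(norm g / (lambda_min H - b)^2)-lipschitz_on {a..b} (\<lambda>\<mu>. norm (Rs \<mu> *v g))"
proof (rule lipschitz_onI)
  let ?L = "lambda_min H"
  show "0 \<le> norm g / (?L - b)^2" by simp
  fix \<mu> \<nu> assume m: "\<mu> \<in> {a..b}" and n: "\<nu> \<in> {a..b}"
  have ml: "\<mu> < ?L" and nl: "\<nu> < ?L" using m n assms by auto
  have "dist (norm (Rs \<mu> *v g)) (norm (Rs \<nu> *v g)) \<le> norm (Rs \<mu> *v g - Rs \<nu> *v g)"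
    by (simp add: dist_real_def norm_triangle_ineq3)
  also have "\<dots> = \<bar>\<mu> - \<nu>\<bar> * norm (Rs \<mu> *v (Rs \<nu> *v g))"
    using R_resolvent[OF ml nl] by simp
  also have "\<dots> \<le> \<bar>\<mu> - \<nu>\<bar> * (norm g / (?L - b)^2)"
  proof (rule mult_left_mono)
    have "norm (Rs \<mu> *v (Rs \<nu> *v g)) \<le> norm (Rs \<nu> *v g) / (?L - \<mu>)" by (rule R_bound[OF ml])
    also have "\<dots> \<le> (norm g / (?L - \<nu>)) / (?L - \<mu>)"
      using divide_right_mono[OF R_bound[OF nl, of g], of "?L - \<mu>"] ml by simp
    also have "\<dots> = norm g / ((?L - \<nu>) * (?L - \<mu>))" by simp
    also have "\<dots> \<le> norm g / (?L - b)^2"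
    proof (rule divide_left_mono)
      have "?L - b \<le> ?L - \<nu>" "?L - b \<le> ?L - \<mu>" using m n by auto
      then show "(?L - b)^2 \<le> (?L - \<nu>) * (?L - \<mu>)" using assms
        by (simp add: power2_eq_square mult_mono)
      show "0 \<le> norm g" by simp
      show "0 < (?L - \<nu>) * (?L - \<mu>) * (?L - b)^2" using ml nl assms by simp
    qed
    finally show "norm (Rs \<mu> *v (Rs \<nu> *v g)) \<le> norm g / (?L - b)^2" .
  qed simp
  also have "\<dots> = norm g / (?L - b)^2 * dist \<mu> \<nu>" by (simp add: dist_real_def)
  finally show "dist (norm (Rs \<mu> *v g)) (norm (Rs \<nu> *v g)) \<le> norm g / (?L - b)^2 * dist \<mu> \<nu>" .
qed

lemma psi_IVT:
  assumes "b < lambda_min H" "\<gamma> > 0" "\<gamma> \<le> norm (Rs b *v g)"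
  shows "\<exists>\<mu>\<le>b. norm (Rs \<mu> *v g) = \<gamma>"
proof -
  let ?L = "lambda_min H"
  define a where "a = min b (?L - norm g / \<gamma>)"
  have al: "a < ?L" using assms(1) by (simp add: a_def)
  have "norm (Rs a *v g) \<le> norm g / (?L - a)" by (rule R_bound[OF al])
  also have "\<dots> \<le> \<gamma>"
  proof -
    have "norm g / \<gamma> \<le> ?L - a" by (simp add: a_def)
    then have "norm g \<le> \<gamma> * (?L - a)" using assms(2) by (simp add: field_simps)
    then show ?thesis using al by (simp add: field_simps)
  qed
  finally have "norm (Rs a *v g) \<le> \<gamma>" .
  moreover have "a \<le> b" by (simp add: a_def)
  moreover have "continuous_on {a..b} (\<lambda>\<mu>. norm (Rs \<mu> *v g))"
    using lipschitz_on_continuous_on[OF psi_lip[OF assms(1)]] .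
  ultimately obtain x where "a \<le> x" "x \<le> b" "norm (Rs x *v g) = \<gamma>"
    using IVT'[of "\<lambda>\<mu>. norm (Rs \<mu> *v g)" a \<gamma> b] assms(3) by blast
  then show ?thesis by blast
qed

lemma psi_big:
  assumes "norm u = 1" "H *v u = lambda_min H *\<^sub>R u" "g \<bullet> u \<noteq> 0" "\<gamma> > 0"
  shows "\<exists>\<mu><lambda_min H. norm (Rs \<mu> *v g) = \<gamma>"
proof -
  let ?L = "lambda_min H"
  define b where "b = ?L - \<bar>g \<bullet> u\<bar> / \<gamma>"
  have bl: "b < ?L" using assms by (simp add: b_def)
  have Au: "(H - b *\<^sub>R mat 1) *v u = (?L - b) *\<^sub>R u"
    using assms(2) by (simp add: shift_mv algebra_simps)
  have "u = Rs b *v ((H - b *\<^sub>R mat 1) *v u)" using inv_props(2)[OF bl, of u] by (rule sym)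
  also have "\<dots> = Rs b *v ((?L - b) *\<^sub>R u)" by (simp only: Au)
  also have "\<dots> = (?L - b) *\<^sub>R (Rs b *v u)" by (rule matrix_vector_mult_scaleR)
  finally have eq: "u = (?L - b) *\<^sub>R (Rs b *v u)" .
  have "(1 / (?L - b)) *\<^sub>R u = (1 / (?L - b)) *\<^sub>R ((?L - b) *\<^sub>R (Rs b *v u))"
    by (rule arg_cong[where f="\<lambda>v. (1 / (?L - b)) *\<^sub>R v", OF eq])
  then have Ru: "Rs b *v u = (1 / (?L - b)) *\<^sub>R u" using bl by simp
  have "u \<bullet> (Rs b *v g) = (Rs b *v u) \<bullet> g" by (rule R_sym[OF bl])
  also have "\<dots> = ((1 / (?L - b)) *\<^sub>R u) \<bullet> g" by (simp only: Ru)
  also have "\<dots> = (g \<bullet> u) / (?L - b)" by (simp add: inner_commute)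
  finally have ug: "u \<bullet> (Rs b *v g) = (g \<bullet> u) / (?L - b)" .
  have "\<bar>u \<bullet> (Rs b *v g)\<bar> \<le> norm u * norm (Rs b *v g)" by (rule Cauchy_Schwarz_ineq2)
  then have "\<bar>(g \<bullet> u) / (?L - b)\<bar> \<le> norm (Rs b *v g)" using assms(1) by (simp only: ug mult_1_left)
  moreover have "\<bar>(g \<bullet> u) / (?L - b)\<bar> = \<gamma>" using assms(3,4) by (simp add: b_def abs_div abs_mult)
  ultimately have "\<gamma> \<le> norm (Rs b *v g)" by simp
  then obtain \<mu> where mu: "\<mu> \<le> b" "norm (Rs \<mu> *v g) = \<gamma>"
    using psi_IVT[OF bl assms(4)] by blast
  have "\<mu> < ?L" using mu(1) bl by linarith
  then show ?thesis using mu(2) by blast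
qed

lemma AA: "((H - c *\<^sub>R mat 1) ** (H - c *\<^sub>R mat 1)) *v w = (H - c *\<^sub>R mat 1) *v ((H - c *\<^sub>R mat 1) *v w)"
  by (simp add: matrix_vector_mul_assoc)

lemma qep_from_psi:
  assumes "\<mu> < lambda_min H" "norm (Rs \<mu> *v g) = \<gamma>" "\<gamma> > 0" "g \<noteq> 0"
  shows "pQEP_feasible H g \<gamma> (\<mu>, Rs \<mu> *v (Rs \<mu> *v g))"
proof -
  let ?w = "Rs \<mu> *v (Rs \<mu> *v g)"
  have e: "(H - \<mu> *\<^sub>R mat 1) *v ((H - \<mu> *\<^sub>R mat 1) *v ?w) = g"
    using inv_props(1)[OF assms(1)] by simp
  have "g \<bullet> ?w = (Rs \<mu> *v g) \<bullet> (Rs \<mu> *v g)" using R_sym[OF assms(1)] by simp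
  also have "\<dots> = \<gamma>^2" using assms(2) power2_norm_eq_inner[of "Rs \<mu> *v g"] by simp
  finally have gw: "g \<bullet> ?w = \<gamma>^2" .
  have "?w \<noteq> 0" using e assms(4) by (metis matrix_vector_mult_0_right)
  then show ?thesis unfolding pQEP_feasible_def using e gw assms(3) by (simp add: AA)
qed

lemma qep_orth_ge:
  assumes "pQEP_feasible H g \<gamma> (l, w)" "g \<bullet> w = 0"
  shows "lambda_min H \<le> l"
proof -
  let ?A = "H - l *\<^sub>R mat 1"
  have w0: "w \<noteq> 0" and e: "?A *v (?A *v w) = 0"
    using assms unfolding pQEP_feasible_def by (simp_all add: AA)
  have "(?A *v w) \<bullet> (?A *v w) = w \<bullet> (?A *v (?A *v w))" by (rule Asym)
  then have "?A *v w = 0" using e by simp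
  then have "H *v w = l *\<^sub>R w" by (simp add: shift_mv)
  then show ?thesis using L_props(3)[OF symH w0] by simp
qed

lemma psi_from_qep:
  assumes "l < lambda_min H" "pQEP_feasible H g \<gamma> (l, w)" "\<gamma> > 0"
  shows "norm (Rs l *v g) = \<gamma>"
proof -
  let ?A = "H - l *\<^sub>R mat 1"
  define c where "c = inverse (\<gamma>^2) * (g \<bullet> w)"
  have gw: "g \<bullet> w \<noteq> 0" using qep_orth_ge[OF assms(2)] assms(1) by force
  have e: "?A *v (?A *v w) = c *\<^sub>R g"
    using assms(2) unfolding pQEP_feasible_def by (simp add: AA c_def)
  have "w = Rs l *v (Rs l *v (?A *v (?A *v w)))" using inv_props(2)[OF assms(1)] by simp
  also have "\<dots> = c *\<^sub>R (Rs l *v (Rs l *v g))" using e by (simp add: matrix_vector_mult_scaleR)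
  finally have "g \<bullet> w = c * (g \<bullet> (Rs l *v (Rs l *v g)))" by (metis inner_scaleR_right)
  also have "g \<bullet> (Rs l *v (Rs l *v g)) = (norm (Rs l *v g))^2"
    using R_sym[OF assms(1)] by (simp add: power2_norm_eq_inner)
  finally have "g \<bullet> w = inverse (\<gamma>^2) * (g \<bullet> w) * (norm (Rs l *v g))^2" by (simp add: c_def)
  then have "(norm (Rs l *v g))^2 = \<gamma>^2" using gw assms(3) by (simp add: field_simps)
  then show ?thesis using assms(3) by (simp add: power2_eq_iff_nonneg)
qed

lemma lg_below:
  assumes "\<mu> < lambda_min H" "pLG_feasible H g \<gamma> (\<mu>, y)"
  shows "y = - (Rs \<mu> *v g)" "norm (Rs \<mu> *v g) = \<gamma>"
proof -
  have e: "(H - \<mu> *\<^sub>R mat 1) *v y = - g" using assms(2) by (simp add: pLG_feasible_def)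
  have "y = Rs \<mu> *v ((H - \<mu> *\<^sub>R mat 1) *v y)" using inv_props(2)[OF assms(1)] by simp
  also have "\<dots> = - (Rs \<mu> *v g)" using e by (simp add: mv_neg)
  finally show "y = - (Rs \<mu> *v g)" .
  then show "norm (Rs \<mu> *v g) = \<gamma>" using assms(2) by (simp add: pLG_feasible_def)
qed

end

definition penrose :: "real^'n^'m \<Rightarrow> real^'m^'n \<Rightarrow> bool" where
  "penrose A X \<longleftrightarrow> A ** X ** A = A \<and> X ** A ** X = X \<and>
                      transpose (A ** X) = A ** X \<and> transpose (X ** A) = X ** A"

lemma mp_unique:
  fixes A :: "real^'n^'m" and X Y :: "real^'m^'n"
  assumes "penrose A X" "penrose A Y"
  shows "X = Y"
proof -
  have X1: "A ** X ** A = A" and X2: "X ** A ** X = X" and X3: "transpose (A ** X) = A ** X"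
    and X4: "transpose (X ** A) = X ** A" using assms(1) by (auto simp: penrose_def)
  have Y1: "A ** Y ** A = A" and Y2: "Y ** A ** Y = Y" and Y3: "transpose (A ** Y) = A ** Y"
    and Y4: "transpose (Y ** A) = Y ** A" using assms(2) by (auto simp: penrose_def)
  have tA1: "transpose A = transpose A ** (A ** Y)"
  proof -
    have "transpose A = transpose ((A ** Y) ** A)" using Y1 by simp
    also have "\<dots> = transpose A ** transpose (A ** Y)" by (simp add: matrix_transpose_mul)
    also have "\<dots> = transpose A ** (A ** Y)" using Y3 by simp
    finally show ?thesis .
  qed
  have tA2: "transpose A = (X ** A) ** transpose A"
  proof -
    have "transpose A = transpose (A ** (X ** A))" using X1 by (simp add: matrix_mul_assoc)
    also have "\<dots> = transpose (X ** A) ** transpose A" by (simp add: matrix_transpose_mul)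
    also have "\<dots> = (X ** A) ** transpose A" using X4 by simp
    finally show ?thesis .
  qed
  have Xe: "X = X ** (transpose X ** transpose A)"
  proof -
    have "X = X ** (A ** X)" using X2 by (simp add: matrix_mul_assoc)
    also have "\<dots> = X ** transpose (A ** X)" using X3 by simp
    also have "\<dots> = X ** (transpose X ** transpose A)" by (simp add: matrix_transpose_mul)
    finally show ?thesis .
  qed
  have Ye: "Y = (transpose A ** transpose Y) ** Y"
  proof -
    have "Y = (Y ** A) ** Y" using Y2 by simp
    also have "\<dots> = transpose (Y ** A) ** Y" using Y4 by simp
    also have "\<dots> = (transpose A ** transpose Y) ** Y" by (simp add: matrix_transpose_mul)
    finally show ?thesis .
  qed
  have "X = X ** (transpose X ** transpose A)" by (rule Xe)
  also have "\<dots> = X ** (transpose X ** (transpose A ** (A ** Y)))"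
    by (rule arg_cong[where f="\<lambda>T. X ** (transpose X ** T)", OF tA1])
  also have "\<dots> = (X ** (transpose X ** transpose A)) ** (A ** Y)" by (simp add: matrix_mul_assoc)
  also have "\<dots> = X ** (A ** Y)" by (simp only: Xe[symmetric])
  finally have XX: "X = X ** A ** Y" by (simp add: matrix_mul_assoc)
  have "Y = (transpose A ** transpose Y) ** Y" by (rule Ye)
  also have "\<dots> = (((X ** A) ** transpose A) ** transpose Y) ** Y"
    by (rule arg_cong[where f="\<lambda>T. (T ** transpose Y) ** Y", OF tA2])
  also have "\<dots> = (X ** A) ** ((transpose A ** transpose Y) ** Y)" by (simp add: matrix_mul_assoc)
  also have "\<dots> = (X ** A) ** Y" by (simp only: Ye[symmetric])
  finally have "Y = X ** A ** Y" .
  then show ?thesis using XX by simp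
qed

lemma inv_vec:
  fixes M :: "real^'n^'n"
  assumes "invertible M"
  shows "M *v (matrix_inv M *v x) = x" "matrix_inv M *v (M *v x) = x"
proof -
  have "M ** matrix_inv M = mat 1 \<and> matrix_inv M ** M = mat 1"
    using assms unfolding matrix_inv_def invertible_def by (rule someI_ex)
  then show "M *v (matrix_inv M *v x) = x" "matrix_inv M *v (M *v x) = x"
    by (simp_all add: matrix_vector_mul_assoc)
qed

lemma mp_exists_sym:
  fixes A :: "real^'n^'n"
  assumes symA: "transpose A = A"
  shows "\<exists>X. penrose A X"
proof -
  have As: "\<And>x y. (A *v x) \<bullet> y = x \<bullet> (A *v y)" using symdot[OF symA] .
  define K where "K = {x. A *v x = 0}"
  have subK: "subspace K" unfolding K_def subspace_def
    by (simp add: matrix_vector_right_distrib matrix_vector_mult_scaleR)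
  obtain B where B: "0 \<notin> B" "B \<subseteq> K" "pairwise orthogonal B" "independent B" "span B = K"
    using orthogonal_basis_subspace[OF subK] by metis
  have finB: "finite B" using B(4) independent_bound by blast
  define q where "q x = (\<Sum>b\<in>B. (b \<bullet> x / (b \<bullet> b)) *\<^sub>R b)" for x
  have linq: "linear q"
  proof (rule linearI)
    fix x y show "q (x + y) = q x + q y"
      by (simp add: q_def inner_add_right add_divide_distrib scaleR_add_left sum.distrib)
  next
    fix c x show "q (c *\<^sub>R x) = c *\<^sub>R q x"
      by (simp add: q_def scaleR_sum_right)
  qed
  have qK: "q x \<in> K" for x
  proof -
    have "q x \<in> span B" unfolding q_def by (intro span_sum span_mul span_base) 
    then show ?thesis using B(5) by simp
  qed
  have Q1: "A *v q x = 0" for x using qK[of x] by (simp add: K_def)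
  have Q2: "k \<bullet> (x - q x) = 0" if "A *v k = 0" for k x
  proof -
    have "k \<in> span B" using that B(5) by (simp add: K_def)
    then show ?thesis using Gram_Schmidt_step[OF B(3)] unfolding q_def orthogonal_def by blast
  qed
  have qadd: "q (x + y) = q x + q y" "q (x - y) = q x - q y" for x y
    using linq by (simp_all add: linear_add linear_diff)
  have Q3: "q k = k" if "A *v k = 0" for k
  proof -
    have kk: "A *v (k - q k) = 0" using that Q1 by (simp add: matrix_vector_mult_diff_distrib)
    have "(k - q k) \<bullet> (k - q k) = 0" using Q2[OF kk, of k] by simp
    then show ?thesis by simp
  qed
  have Q4: "q (A *v x) = 0" for x
  proof -
    have perp: "k \<bullet> (A *v x) = 0" if "A *v k = 0" for k using As[of k x] that by simp
    have "q (A *v x) \<bullet> q (A *v x) = q (A *v x) \<bullet> (A *v x) - q (A *v x) \<bullet> (A *v x - q (A *v x))"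
      by (simp add: inner_diff_right)
    also have "\<dots> = 0" using perp[OF Q1] Q2[OF Q1] by simp
    finally show ?thesis by simp
  qed
  have Q5: "x \<bullet> q y = q x \<bullet> q y" for x y
  proof -
    have "(x - q x) \<bullet> q y = 0" using Q2[OF Q1[of y], of x] by (simp add: inner_commute)
    then show ?thesis by (simp add: inner_diff_left)
  qed
  have Q5': "x \<bullet> q y = q x \<bullet> y" for x y using Q5[of x y] Q5[of y x] by (simp add: inner_commute)
  define Q where "Q = matrix q"
  have Qv: "Q *v x = q x" for x unfolding Q_def using matrix_vector_mul(2)[OF linq] by metis
  define M where "M = A + Q"
  have Mv: "M *v x = A *v x + q x" for x by (simp add: M_def matrix_vector_mult_add_rdistrib Qv)
  have "\<forall>x. M *v x = 0 \<longrightarrow> x = 0"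
  proof (intro allI impI)
    fix x assume "M *v x = 0"
    then have ax: "A *v x = - q x" using Mv by (simp add: eq_neg_iff_add_eq_0)
    have "(A *v x) \<bullet> (A *v x) = - ((A *v x) \<bullet> q x)" using ax by simp
    also have "(A *v x) \<bullet> q x = x \<bullet> (A *v q x)" by (rule As)
    finally have "A *v x = 0" using Q1 by simp
    then have "q x = 0" using ax by simp
    then show "x = 0" using Q3[OF \<open>A *v x = 0\<close>] by simp
  qed
  then have invM: "invertible M" using invertible_left_inverse matrix_left_invertible_ker by blast
  define N where "N = matrix_inv M"
  have N1: "M *v (N *v x) = x" and N2: "N *v (M *v x) = x" for x
    using inv_vec[OF invM] by (simp_all add: N_def)
  have Nlin: "N *v (x + y) = N *v x + N *v y" for x y by (simp add: matrix_vector_right_distrib)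
  have Nq: "N *v q x = q x" for x
  proof -
    have "M *v q x = q x" using Mv Q1 Q3[OF Q1] by simp
    then show ?thesis using N2[of "q x"] by simp
  qed
  have qN: "q (N *v x) = q x" for x
  proof -
    have "q (M *v y) = q y" for y using Mv qadd Q4 Q3[OF Q1] by simp
    then show ?thesis using N1 by metis
  qed
  have AN: "A *v (N *v x) = x - q x" for x using N1[of x] Mv[of "N *v x"] qN[of x] by (simp add: eq_diff_eq)
  have NA: "N *v (A *v x) = x - q x" for x
    using N2[of x] Mv[of x] Nlin[of "A *v x" "q x"] Nq[of x] by (simp add: eq_diff_eq)
  define X where "X = N - Q"
  have Xv: "X *v x = N *v x - q x" for x by (simp add: X_def matrix_vector_mult_diff_rdistrib Qv)
  have AX: "A *v (X *v x) = x - q x" for x using AN Q1 by (simp add: Xv matrix_vector_mult_diff_distrib)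
  have XA: "X *v (A *v x) = x - q x" for x using NA Q4 by (simp add: Xv)
  have P1: "A ** X ** A = A"
    by (rule matrix_eq[THEN iffD2], simp add: matrix_vector_mul_assoc[symmetric] XA
        matrix_vector_mult_diff_distrib Q1)
  have P2: "X ** A ** X = X"
  proof (rule matrix_eq[THEN iffD2], intro allI)
    fix x
    have "(X ** A ** X) *v x = X *v (x - q x)" by (simp add: matrix_vector_mul_assoc[symmetric] AX)
    also have "\<dots> = X *v x - (N *v q x - q (q x))" by (simp add: Xv matrix_vector_mult_diff_distrib qadd)
    also have "\<dots> = X *v x" using Nq Q3[OF Q1] by simp
    finally show "(X ** A ** X) *v x = X *v x" .
  qed
  have P3: "transpose (A ** X) = A ** X"
    by (rule sym_iff_dot) (simp add: matrix_vector_mul_assoc[symmetric] AX inner_diff_left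
        inner_diff_right Q5')
  have P4: "transpose (X ** A) = X ** A"
    by (rule sym_iff_dot) (simp add: matrix_vector_mul_assoc[symmetric] XA inner_diff_left
        inner_diff_right Q5')
  show ?thesis using P1 P2 P3 P4 by (auto simp: penrose_def)
qed

lemma mp_pinv_penrose:
  fixes A :: "real^'n^'n"
  assumes "transpose A = A"
  shows "penrose A (mp_pinv A)"
proof -
  have "\<exists>!X. penrose A X" using mp_exists_sym[OF assms] mp_unique by blast
  then show ?thesis unfolding mp_pinv_def penrose_def[symmetric] by (rule theI')
qed

lemma pyth: "x \<bullet> k = 0 \<Longrightarrow> (norm (x + k))^2 = (norm x)^2 + (norm (k::real^'n))^2"
  by (simp add: power2_norm_eq_inner inner_add_left inner_add_right inner_commute)

theorem theorem2p6:
  fixes H :: "real^'n^'n" and g0 :: "real^'n" and \<gamma> :: real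
    and lam :: real and w :: "real^'n"
  assumes "transpose H = H"
    and "g0 \<noteq> 0"
    and "\<gamma> > 0"
    and "pQEP_minimizer H g0 \<gamma> (lam, w)"
  shows "((\<forall>l v. pQEP_minimizer H g0 \<gamma> (l, v) \<longrightarrow> g0 \<bullet> v \<noteq> 0) \<longrightarrow>
           lam < lambda_min H \<and> (\<exists>!p. pLG_minimizer H g0 \<gamma> p))
       \<and> ((\<exists>l v. pQEP_minimizer H g0 \<gamma> (l, v) \<and> g0 \<bullet> v = 0) \<longrightarrow>
           lam = lambda_min H \<and>
           ((\<exists>!p. pLG_minimizer H g0 \<gamma> p) \<longleftrightarrow>
              norm (- (mp_pinv (H - lam *\<^sub>R mat 1) *v g0)) = \<gamma>))"
proof -
  note symH = assms(1)
  let ?L = "lambda_min H"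
  let ?R = "Rs H"
  have minP1: "pQEP_feasible H g0 \<gamma> (lam, w)" and
    minP2: "\<And>q. pQEP_feasible H g0 \<gamma> q \<Longrightarrow> lam \<le> fst q"
    using assms(4) unfolding pQEP_minimizer_def by auto
  obtain u where u: "norm u = 1" "H *v u = ?L *\<^sub>R u" using L_props(1)[OF symH] by blast
  have u0: "u \<noteq> 0" using u by auto
  have Au: "(H - ?L *\<^sub>R mat 1) *v u = 0" using u by (simp add: shift_mv)
  have root_ge: "lam \<le> \<mu>" if "\<mu> < ?L" "norm (?R \<mu> *v g0) = \<gamma>" for \<mu>
    using minP2[OF qep_from_psi[OF symH that assms(3) assms(2)]] by simp
  have uL_feas: "pQEP_feasible H g0 \<gamma> (?L, u)" if "g0 \<bullet> u = 0"
    unfolding pQEP_feasible_def using u0 that by (simp add: AA[OF symH] Au)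
  have lam_le: "lam \<le> ?L"
  proof (cases "g0 \<bullet> u = 0")
    case True then show ?thesis using minP2[OF uL_feas] by simp
  next
    case False
    then obtain \<mu> where "\<mu> < ?L" "norm (?R \<mu> *v g0) = \<gamma>"
      using psi_big[OF symH u False assms(3)] by blast
    then show ?thesis using root_ge by force
  qed
  have LGbelow: "lam \<le> \<mu>" "y = - (?R \<mu> *v g0)" if "\<mu> < ?L" "pLG_feasible H g0 \<gamma> (\<mu>, y)" for \<mu> y
    using lg_below[OF symH that] root_ge[OF that(1)] by auto
  have part1: "lam < ?L \<and> (\<exists>!p. pLG_minimizer H g0 \<gamma> p)"
    if hyp: "\<forall>l v. pQEP_minimizer H g0 \<gamma> (l, v) \<longrightarrow> g0 \<bullet> v \<noteq> 0"
  proof -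
    have lamlt: "lam < ?L"
    proof (rule ccontr)
      assume "\<not> lam < ?L"
      then have eq: "lam = ?L" using lam_le by simp
      show False
      proof (cases "g0 \<bullet> u = 0")
        case True
        have "pQEP_minimizer H g0 \<gamma> (?L, u)"
          unfolding pQEP_minimizer_def using uL_feas[OF True] minP2 eq by auto
        then show False using hyp True by blast
      next
        case False
        then obtain \<mu> where "\<mu> < ?L" "norm (?R \<mu> *v g0) = \<gamma>"
          using psi_big[OF symH u False assms(3)] by blast
        then show False using root_ge eq by force
      qed
    qed
    have psi: "norm (?R lam *v g0) = \<gamma>" using psi_from_qep[OF symH lamlt minP1 assms(3)] .
    define p0 where "p0 = (lam, - (?R lam *v g0))"
    have p0f: "pLG_feasible H g0 \<gamma> p0"
      unfolding pLG_feasible_def p0_def using inv_props(1)[OF symH lamlt] psi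
      by (simp add: mv_neg)
    have lower: "lam \<le> fst q" if "pLG_feasible H g0 \<gamma> q" for q
    proof (cases "fst q < ?L")
      case True
      then show ?thesis using LGbelow(1)[OF True, of "snd q"] that by simp
    next
      case False then show ?thesis using lamlt by simp
    qed
    have p0m: "pLG_minimizer H g0 \<gamma> p0"
      unfolding pLG_minimizer_def using p0f lower by (simp add: p0_def)
    have uniq: "p = p0" if "pLG_minimizer H g0 \<gamma> p" for p
    proof -
      obtain \<mu> y where p: "p = (\<mu>, y)" by fastforce
      have f: "pLG_feasible H g0 \<gamma> (\<mu>, y)" and le: "\<mu> \<le> lam"
        using that p0f unfolding pLG_minimizer_def p p0_def by auto
      have "lam \<le> \<mu>" using lower[OF f] by simp
      then have "\<mu> = lam" using le by simp
      then show ?thesis using LGbelow(2)[of \<mu> y] f lamlt p p0_def by simp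
    qed
    show ?thesis using lamlt p0m uniq by blast
  qed
  have part2: "lam = ?L \<and> ((\<exists>!p. pLG_minimizer H g0 \<gamma> p) \<longleftrightarrow>
              norm (- (mp_pinv (H - lam *\<^sub>R mat 1) *v g0)) = \<gamma>)"
    if hyp: "\<exists>l v. pQEP_minimizer H g0 \<gamma> (l, v) \<and> g0 \<bullet> v = 0"
  proof -
    obtain l v where lv: "pQEP_minimizer H g0 \<gamma> (l, v)" "g0 \<bullet> v = 0" using hyp by blast
    have "?L \<le> l" using qep_orth_ge[OF symH _ lv(2)] lv(1) unfolding pQEP_minimizer_def by auto
    moreover have "lam \<le> l" using minP2 lv(1) unfolding pQEP_minimizer_def by auto
    moreover have "l \<le> lam" using lv(1) minP1 unfolding pQEP_minimizer_def by auto
    ultimately have lamL: "lam = ?L" using lam_le by simp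
    let ?A = "H - lam *\<^sub>R mat 1"
    have symA: "transpose ?A = ?A" using shift_sym[OF symH] .
    have As: "(?A *v x) \<bullet> y = x \<bullet> (?A *v y)" for x y using symdot[OF symA] .
    have noroot: "\<not> norm (?R \<mu> *v g0) = \<gamma>" if "\<mu> < ?L" for \<mu>
      using root_ge[OF that] that lamL by force
    have gperp: "g0 \<bullet> k = 0" if "?A *v k = 0" for k
    proof (rule ccontr)
      assume ne: "g0 \<bullet> k \<noteq> 0"
      then have k0: "k \<noteq> 0" by auto
      define k' where "k' = (1 / norm k) *\<^sub>R k"
      have "norm k' = 1" using k0 by (simp add: k'_def)
      moreover have "H *v k' = ?L *\<^sub>R k'" using that lamL
        by (simp add: k'_def shift_mv matrix_vector_mult_scaleR)
      moreover have "g0 \<bullet> k' \<noteq> 0" using ne k0 by (simp add: k'_def)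
      ultimately obtain \<mu> where "\<mu> < ?L" "norm (?R \<mu> *v g0) = \<gamma>"
        using psi_big[OF symH] assms(3) by blast
      then show False using noroot by blast
    qed
    define P where "P = mp_pinv ?A"
    have pen: "?A ** P ** ?A = ?A" "P ** ?A ** P = P" "transpose (?A ** P) = ?A ** P"
      "transpose (P ** ?A) = P ** ?A"
      using mp_pinv_penrose[OF symA] unfolding P_def penrose_def by auto
    have APs: "(?A *v (P *v x)) \<bullet> y = x \<bullet> (?A *v (P *v y))" for x y
      using symdot[OF pen(3)] by (simp add: matrix_vector_mul_assoc)
    have PAs: "(P *v (?A *v x)) \<bullet> y = x \<bullet> (P *v (?A *v y))" for x y
      using symdot[OF pen(4)] by (simp add: matrix_vector_mul_assoc)
    have APA: "?A *v (P *v (?A *v x)) = ?A *v x" for x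
      using pen(1) by (metis matrix_vector_mul_assoc)
    have PAP: "P *v (?A *v (P *v x)) = P *v x" for x
      using pen(2) by (metis matrix_vector_mul_assoc)
    define xs where "xs = - (P *v g0)"
    have Axs: "?A *v xs = - g0"
    proof -
      define r where "r = g0 - ?A *v (P *v g0)"
      have rperp: "r \<bullet> (?A *v z) = 0" for z
      proof -
        have "(?A *v (P *v g0)) \<bullet> (?A *v z) = g0 \<bullet> (?A *v (P *v (?A *v z)))" by (rule APs)
        then show ?thesis by (simp add: r_def inner_diff_left APA)
      qed
      have "(?A *v r) \<bullet> (?A *v r) = r \<bullet> (?A *v (?A *v r))" by (rule As)
      then have Ar: "?A *v r = 0" using rperp by simp
      have "r \<bullet> r = g0 \<bullet> r - (?A *v (P *v g0)) \<bullet> r" by (simp add: r_def inner_diff_left)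
      also have "\<dots> = 0" using gperp[OF Ar] rperp[of "P *v g0"] by (simp add: inner_commute)
      finally have "r = 0" by simp
      then show ?thesis by (simp add: r_def xs_def mv_neg)
    qed
    have xsperp: "xs \<bullet> k = 0" if "?A *v k = 0" for k
    proof -
      have "(P *v g0) \<bullet> k = (P *v (?A *v (P *v g0))) \<bullet> k" using PAP by simp
      also have "\<dots> = (P *v g0) \<bullet> (P *v (?A *v k))" by (rule PAs)
      finally show ?thesis using that by (simp add: xs_def)
    qed
    define z where "z = - (transpose P *v (P *v g0))"
    have xsA: "xs = ?A *v z"
    proof -
      have "P *v g0 = (P ** ?A) *v (P *v g0)" using PAP[of g0] by (simp add: matrix_vector_mul_assoc[symmetric])
      also have "\<dots> = transpose (P ** ?A) *v (P *v g0)" using pen(4) by simp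
      also have "\<dots> = ?A *v (transpose P *v (P *v g0))"
        by (simp add: matrix_transpose_mul symA matrix_vector_mul_assoc matrix_mul_assoc)
      finally show ?thesis by (simp add: xs_def z_def mv_neg)
    qed
    have near: "norm xs - 2 * (?L - \<mu>) * norm z \<le> norm (?R \<mu> *v g0)" if ml: "\<mu> < ?L" for \<mu>
    proof -
      let ?B = "H - \<mu> *\<^sub>R mat 1"
      have e1: "?B *v xs = - g0 + (?L - \<mu>) *\<^sub>R xs" using Axs lamL
        by (simp add: shift_mv algebra_simps)
      have "xs = ?R \<mu> *v (?B *v xs)" using inv_props(2)[OF symH ml] by simp
      also have "\<dots> = - (?R \<mu> *v g0) + (?L - \<mu>) *\<^sub>R (?R \<mu> *v xs)"
        unfolding e1 by (simp add: matrix_vector_right_distrib mv_neg matrix_vector_mult_scaleR matrix_vector_mult_diff_distrib)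
      finally have d: "?R \<mu> *v g0 + xs = (?L - \<mu>) *\<^sub>R (?R \<mu> *v xs)" by (simp add: algebra_simps)
      have e2: "xs = ?B *v z - (?L - \<mu>) *\<^sub>R z" using xsA lamL by (simp add: shift_mv algebra_simps)
      have "?R \<mu> *v xs = z - (?L - \<mu>) *\<^sub>R (?R \<mu> *v z)"
        unfolding e2 using inv_props(2)[OF symH ml]
        by (simp add: matrix_vector_mult_diff_distrib matrix_vector_mult_scaleR)
      then have "norm (?R \<mu> *v xs) \<le> norm z + (?L - \<mu>) * norm (?R \<mu> *v z)"
        using ml by (metis abs_of_pos diff_gt_0_iff_gt norm_scaleR norm_triangle_ineq4)
      also have "(?L - \<mu>) * norm (?R \<mu> *v z) \<le> norm z"
        using R_bound[OF symH ml, of z] ml by (simp add: field_simps)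
      finally have "norm (?R \<mu> *v xs) \<le> 2 * norm z" by simp
      then have "norm (?R \<mu> *v g0 + xs) \<le> (?L - \<mu>) * (2 * norm z)"
        unfolding d using ml by (simp add: mult_left_mono)
      moreover have "norm xs \<le> norm (?R \<mu> *v g0) + norm (?R \<mu> *v g0 + xs)"
        by (metis add.commute add_diff_cancel_left' norm_triangle_ineq4 add_diff_cancel norm_minus_commute
            norm_triangle_sub)
      moreover have "(?L - \<mu>) * (2 * norm z) = 2 * (?L - \<mu>) * norm z" by (simp add: algebra_simps)
      ultimately show ?thesis by linarith
    qed
    have xs_le: "norm xs \<le> \<gamma>"
    proof (rule ccontr)
      assume "\<not> norm xs \<le> \<gamma>"
      then have gt: "norm xs > \<gamma>" by simp
      define \<delta> where "\<delta> = (norm xs - \<gamma>) / (2 * norm z + 1)"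
      have den: "2 * norm z + 1 > 0" by (simp add: add_nonneg_pos)
      have dpos: "\<delta> > 0" unfolding \<delta>_def using gt den by (intro divide_pos_pos) simp_all
      have "2 * \<delta> * norm z < norm xs - \<gamma>"
      proof -
        have "2 * \<delta> * norm z < \<delta> * (2 * norm z + 1)" using dpos by (simp add: algebra_simps)
        also have "\<dots> = norm xs - \<gamma>" using den by (simp add: \<delta>_def)
        finally show ?thesis .
      qed
      then have "\<gamma> \<le> norm (?R (?L - \<delta>) *v g0)" using near[of "?L - \<delta>"] dpos by simp
      then obtain \<mu> where "\<mu> \<le> ?L - \<delta>" "norm (?R \<mu> *v g0) = \<gamma>"
        using psi_IVT[OF symH _ assms(3), of "?L - \<delta>" g0] dpos by auto
      then show False using noroot dpos by force
    qed
    have LGge: "?L \<le> \<mu>" if "pLG_feasible H g0 \<gamma> (\<mu>, y)" for \<mu> y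
      using LGbelow(1)[OF _ that] lamL by force
    have LGat: "(norm y)^2 = (norm xs)^2 + (norm (y - xs))^2" "?A *v (y - xs) = 0"
      if "pLG_feasible H g0 \<gamma> (lam, y)" for y
    proof -
      have "?A *v y = - g0" using that by (simp add: pLG_feasible_def)
      then show k: "?A *v (y - xs) = 0" using Axs by (simp add: matrix_vector_mult_diff_distrib)
      have "y = xs + (y - xs)" by simp
      then show "(norm y)^2 = (norm xs)^2 + (norm (y - xs))^2"
        using pyth[OF xsperp[OF k]] by metis
    qed
    have feasL: "pLG_feasible H g0 \<gamma> (lam, xs + k)" if "?A *v k = 0" "(norm (xs + k)) = \<gamma>" for k
      unfolding pLG_feasible_def using that Axs by (simp add: matrix_vector_right_distrib)
    have minL: "pLG_minimizer H g0 \<gamma> (lam, y)" if "pLG_feasible H g0 \<gamma> (lam, y)" for y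
      unfolding pLG_minimizer_def using that LGge lamL by (auto simp: pLG_feasible_def)
    have "(\<exists>!p. pLG_minimizer H g0 \<gamma> p) \<longleftrightarrow> norm xs = \<gamma>"
    proof
      assume ex1: "\<exists>!p. pLG_minimizer H g0 \<gamma> p"
      show "norm xs = \<gamma>"
      proof (rule ccontr)
        assume "norm xs \<noteq> \<gamma>"
        then have lt: "norm xs < \<gamma>" using xs_le by simp
        define s where "s = sqrt (\<gamma>^2 - (norm xs)^2)"
        have s2: "s^2 = \<gamma>^2 - (norm xs)^2" unfolding s_def using lt assms(3)
          by (simp add: abs_less_iff power2_less_eq_zero_iff power_strict_mono)
        have spos: "s > 0" unfolding s_def using lt assms(3)
          by (simp add: abs_less_iff power_strict_mono)
        have Auk: "?A *v (c *\<^sub>R u) = 0" for c using Au lamL by (simp add: matrix_vector_mult_scaleR)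
        have nrm: "norm (xs + c *\<^sub>R u) = \<gamma>" if "c^2 = s^2" for c
        proof -
          have "(norm (xs + c *\<^sub>R u))^2 = (norm xs)^2 + c^2"
            using pyth[OF xsperp[OF Auk[of c]]] u by simp
          then have "(norm (xs + c *\<^sub>R u))^2 = \<gamma>^2" using that s2 by simp
          then show ?thesis using assms(3) by (simp add: power2_eq_iff_nonneg)
        qed
        have m1: "pLG_minimizer H g0 \<gamma> (lam, xs + s *\<^sub>R u)"
          using minL feasL Auk nrm by simp
        have sq: "(- s)^2 = s^2" by simp
        have m2: "pLG_minimizer H g0 \<gamma> (lam, xs + (- s) *\<^sub>R u)"
          by (rule minL[OF feasL[OF Auk[of "- s"] nrm[OF sq]]])
        have "xs + s *\<^sub>R u \<noteq> xs + (- s) *\<^sub>R u"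
        proof
          assume "xs + s *\<^sub>R u = xs + (- s) *\<^sub>R u"
          then have "s *\<^sub>R u = (- s) *\<^sub>R u" by (simp only: add_left_cancel)
          then have "s = - s \<or> u = 0" by (simp only: scaleR_cancel_right)
          then show False using spos u0 by linarith
        qed
        then show False using ex1 m1 m2 by blast
      qed
    next
      assume eqg: "norm xs = \<gamma>"
      have m0: "pLG_minimizer H g0 \<gamma> (lam, xs)" using minL feasL[of 0] eqg by simp
      show "\<exists>!p. pLG_minimizer H g0 \<gamma> p"
      proof (rule ex1I[where P="pLG_minimizer H g0 \<gamma>", OF m0])
        fix p assume pm: "pLG_minimizer H g0 \<gamma> p"
        obtain \<mu> y where p: "p = (\<mu>, y)" by fastforce
        have f: "pLG_feasible H g0 \<gamma> (\<mu>, y)" and le: "\<mu> \<le> lam"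
          using pm m0 unfolding pLG_minimizer_def p by auto
        have mu: "\<mu> = lam" using LGge[OF f] le lamL by simp
        have fl: "pLG_feasible H g0 \<gamma> (lam, y)" using f mu by simp
        have "(norm y)^2 = \<gamma>^2" using fl by (simp add: pLG_feasible_def)
        then have "norm (y - xs) = 0" using LGat(1)[OF fl] eqg by simp
        then show "p = (lam, xs)" using p mu by simp
      qed
    qed
    then show ?thesis using lamL by (simp add: xs_def P_def)
  qed
  show ?thesis using part1 part2 by blast
qed

end
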